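(* Let $V$ be a finite-dimensional vector space over $k$ with basis $v_1,\dots,v_n$ and dual basis $v_1^*,\dots,v_n^*$, let $M$ be a vector space, let $\mu:\mathfrak{gl}(V)\to\mathrm{End}(M)$ be linear, and let $a:V\otimes M\to V\otimes M$ be the corresponding linear map $a(v\otimes x)=\sum_{j=1}^n v_j\otimes\mu(v\otimes v_j^* )(x)$. Define endomorphisms of $V\otimes V\otimes M$ by $\tau(v\otimes w\otimes x)=w\otimes v\otimes x$, $a_2=\mathrm{id}_V\otimes a$, and $a_1=\tau a_2\tau$. Then $\mu([X,Y])=[\mu(X),\mu(Y)]$ for all $X,Y\in\mathfrak{gl}(V)$ if and only if $$a_1a_2-a_2a_1=\tau(a_1-a_2).$$
   Context: $\mathfrak{gl}(V)$ is identified with $V\otimes V^*$ via $v\otimes f\mapsto(w\mapsto f(w)v)$; the map $\mu\mapsto a$ above is the resulting bijection between linear maps $\mathfrak{gl}(V)\to\mathrm{End}(M)$ and linear maps $V\otimes M\to V\otimes M$ (independent of the basis). Brackets are commutators. *)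

theory Defs
  imports "HOL-Analysis.Analysis"
begin

text \<open>V = k^n with its standard basis e_1..e_n (index type 'n).
  gl(V) is represented by n x n matrices over k. Tensor products with the
  basis of V are represented by coordinates:
  V (x) M  ~  'n => 'm   (sum_i e_i (x) x_i  corresponds to  \<lambda>i. x_i),
  V (x) V (x) M  ~  'n => 'n => 'm  (sum_{i,l} e_i (x) e_l (x) x_il corresponds to \<lambda>i l. x_il).\<close>

definition vtens :: "('k \<Rightarrow> 'm \<Rightarrow> 'm) \<Rightarrow> 'k^'n \<Rightarrow> 'm \<Rightarrow> ('n \<Rightarrow> 'm)" where
  "vtens sc v x = (\<lambda>i. sc (v $ i) x)"

text \<open>The element v (x) f of gl(V) = V (x) V^*, i.e. the map w \<mapsto> f(w) v,
  for f = e_j^* the j-th dual basis vector, as a matrix.\<close>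
definition rank1_dual :: "'k::field^'n \<Rightarrow> 'n \<Rightarrow> 'k^'n^'n" where
  "rank1_dual v j = (\<chi> i l. if l = j then v $ i else 0)"

definition mat_scale :: "'k::field \<Rightarrow> 'k^'n^'n \<Rightarrow> 'k^'n^'n" where
  "mat_scale c X = (\<chi> i l. c * X $ i $ l)"

definition gl_bracket :: "'k::field^'n^'n \<Rightarrow> 'k^'n^'n \<Rightarrow> 'k^'n^'n" where
  "gl_bracket X Y = X ** Y - Y ** X"

definition gl_rep_linear ::
  "('k::field \<Rightarrow> 'm::ab_group_add \<Rightarrow> 'm) \<Rightarrow> ('k^'n^'n \<Rightarrow> 'm \<Rightarrow> 'm) \<Rightarrow> bool" where
  "gl_rep_linear sc \<mu> \<longleftrightarrow>
     (\<forall>X. Vector_Spaces.linear sc sc (\<mu> X)) \<and>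
     (\<forall>X Y x. \<mu> (X + Y) x = \<mu> X x + \<mu> Y x) \<and>
     (\<forall>c X x. \<mu> (mat_scale c X) x = sc c (\<mu> X x))"

definition VM_linear ::
  "('k \<Rightarrow> 'm::ab_group_add \<Rightarrow> 'm) \<Rightarrow> (('n \<Rightarrow> 'm) \<Rightarrow> ('n \<Rightarrow> 'm)) \<Rightarrow> bool" where
  "VM_linear sc a \<longleftrightarrow>
     (\<forall>\<xi> \<eta>. a (\<lambda>i. \<xi> i + \<eta> i) = (\<lambda>j. a \<xi> j + a \<eta> j)) \<and>
     (\<forall>c \<xi>. a (\<lambda>i. sc c (\<xi> i)) = (\<lambda>j. sc c (a \<xi> j)))"

definition tau :: "('n \<Rightarrow> 'n \<Rightarrow> 'm) \<Rightarrow> ('n \<Rightarrow> 'n \<Rightarrow> 'm)" where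
  "tau \<zeta> = (\<lambda>i l. \<zeta> l i)"

definition a2 :: "(('n \<Rightarrow> 'm) \<Rightarrow> ('n \<Rightarrow> 'm)) \<Rightarrow> ('n \<Rightarrow> 'n \<Rightarrow> 'm) \<Rightarrow> ('n \<Rightarrow> 'n \<Rightarrow> 'm)" where
  "a2 a \<zeta> = (\<lambda>i. a (\<zeta> i))"

definition a1 :: "(('n \<Rightarrow> 'm) \<Rightarrow> ('n \<Rightarrow> 'm)) \<Rightarrow> ('n \<Rightarrow> 'n \<Rightarrow> 'm) \<Rightarrow> ('n \<Rightarrow> 'n \<Rightarrow> 'm)" where
  "a1 a \<zeta> = tau (a2 a (tau \<zeta>))"

end

theory Submission
  imports Defs
begin

locale P42 = vector_space sc for sc :: "'k::field \<Rightarrow> 'm::ab_group_add \<Rightarrow> 'm" +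
  fixes \<mu> :: "'k^'n::finite^'n \<Rightarrow> 'm \<Rightarrow> 'm"
  assumes mu_lin: "gl_rep_linear sc \<mu>"
begin

lemma ifz1: "(a::'k) * (if P then b else 0) = (if P then a*b else 0)" by simp
lemma ifz2: "(if P then b else 0) * (a::'k) = (if P then b*a else 0)" by simp

lemma sum_ifout: "(\<Sum>x\<in>A. if P then f x else 0) = (if P then sum f A else (0::'b::comm_monoid_add))" by simp

definition E :: "'n \<Rightarrow> 'n \<Rightarrow> 'k^'n^'n" where "E p i = rank1_dual (axis p 1) i"

lemma E_nth: "E p i $ r $ s = (if r = p then (if s = i then 1 else 0) else 0)"
  by (simp add: E_def rank1_dual_def axis_def)

lemma m_lin: "Vector_Spaces.linear sc sc (\<mu> X)"
  using mu_lin by (simp add: gl_rep_linear_def)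

lemma m_add: "\<mu> X (x + y) = \<mu> X x + \<mu> X y"
proof - interpret Vector_Spaces.linear sc sc "\<mu> X" by (rule m_lin) show ?thesis by (rule add) qed
lemma m_zero[simp]: "\<mu> X 0 = 0"
proof - interpret Vector_Spaces.linear sc sc "\<mu> X" by (rule m_lin) show ?thesis by (rule zero) qed
lemma m_diff: "\<mu> X (x - y) = \<mu> X x - \<mu> X y"
proof - interpret Vector_Spaces.linear sc sc "\<mu> X" by (rule m_lin) show ?thesis by (rule diff) qed
lemma m_sum: "\<mu> X (sum g S) = (\<Sum>k\<in>S. \<mu> X (g k))"
proof - interpret Vector_Spaces.linear sc sc "\<mu> X" by (rule m_lin) show ?thesis by (rule sum) qed
lemma m_scale: "\<mu> X (sc c x) = sc c (\<mu> X x)"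
proof - interpret Vector_Spaces.linear sc sc "\<mu> X" by (rule m_lin) show ?thesis by (rule scale) qed

lemma mu_add: "\<mu> (X + Y) x = \<mu> X x + \<mu> Y x"
  using mu_lin by (simp add: gl_rep_linear_def)
lemma mu_scale: "\<mu> (mat_scale c X) x = sc c (\<mu> X x)"
  using mu_lin by (simp add: gl_rep_linear_def)
lemma mu_zero[simp]: "\<mu> 0 x = 0"
  using mu_add[of 0 0 x] by simp
lemma mu_diff: "\<mu> (X - Y) x = \<mu> X x - \<mu> Y x"
  using mu_add[of "X - Y" Y x] by (simp add: algebra_simps)
lemma mu_sum: "\<mu> (sum f S) x = (\<Sum>k\<in>S. \<mu> (f k) x)"
  by (induct S rule: infinite_finite_induct) (simp_all add: mu_add)

lemma mat_expand: "X = (\<Sum>p\<in>UNIV. \<Sum>i\<in>UNIV. mat_scale (X$p$i) (E p i))"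
  by (simp add: vec_eq_iff sum_component mat_scale_def E_nth ifz1 ifz2 sum_ifout cong: if_cong)

lemma mu_expand: "\<mu> X x = (\<Sum>p\<in>UNIV. \<Sum>i\<in>UNIV. sc (X$p$i) (\<mu> (E p i) x))"
  by (subst mat_expand) (simp add: mu_sum mu_scale)

lemma bracket_E: "gl_bracket (E p i) (E q l) = (if i = q then E p l else 0) - (if l = p then E q i else 0)"
  by (simp add: vec_eq_iff gl_bracket_def matrix_matrix_mult_def E_nth ifz1 ifz2 cong: if_cong)

lemma mu_bracket_E: "\<mu> (gl_bracket (E p i) (E q l)) y = (if i = q then \<mu> (E p l) y else 0) - (if l = p then \<mu> (E q i) y else 0)"
  by (simp add: bracket_E mu_diff)

lemma sum4_swap: "(\<Sum>a\<in>A. \<Sum>b\<in>B. \<Sum>c\<in>C. \<Sum>d\<in>D. f a b c d) = (\<Sum>c\<in>C. \<Sum>d\<in>D. \<Sum>a\<in>A. \<Sum>b\<in>B. f a b c d)"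
proof -
  have "(\<Sum>a\<in>A. \<Sum>b\<in>B. \<Sum>c\<in>C. \<Sum>d\<in>D. f a b c d) = (\<Sum>a\<in>A. \<Sum>c\<in>C. \<Sum>b\<in>B. \<Sum>d\<in>D. f a b c d)"
    by (rule sum.cong[OF refl], rule sum.swap)
  also have "\<dots> = (\<Sum>c\<in>C. \<Sum>a\<in>A. \<Sum>b\<in>B. \<Sum>d\<in>D. f a b c d)" by (rule sum.swap)
  also have "\<dots> = (\<Sum>c\<in>C. \<Sum>a\<in>A. \<Sum>d\<in>D. \<Sum>b\<in>B. f a b c d)"
    by (rule sum.cong[OF refl], rule sum.cong[OF refl], rule sum.swap)
  also have "\<dots> = (\<Sum>c\<in>C. \<Sum>d\<in>D. \<Sum>a\<in>A. \<Sum>b\<in>B. f a b c d)"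
    by (rule sum.cong[OF refl], rule sum.swap)
  finally show ?thesis .
qed

lemma sum3_swap: "(\<Sum>a\<in>A. \<Sum>b\<in>B. \<Sum>c\<in>C. f a b c) = (\<Sum>c\<in>C. \<Sum>b\<in>B. \<Sum>a\<in>A. f a b c)"
proof -
  have "(\<Sum>a\<in>A. \<Sum>b\<in>B. \<Sum>c\<in>C. f a b c) = (\<Sum>a\<in>A. \<Sum>c\<in>C. \<Sum>b\<in>B. f a b c)"
    by (rule sum.cong[OF refl], rule sum.swap)
  also have "\<dots> = (\<Sum>c\<in>C. \<Sum>a\<in>A. \<Sum>b\<in>B. f a b c)" by (rule sum.swap)
  also have "\<dots> = (\<Sum>c\<in>C. \<Sum>b\<in>B. \<Sum>a\<in>A. f a b c)"
    by (rule sum.cong[OF refl], rule sum.swap)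
  finally show ?thesis .
qed

lemma ifdiff: "(if P then A else 0) - (if P then B else 0) = (if P then A - B else (0::'b::ab_group_add))" by simp

lemma m_if: "\<mu> X (if P then y else 0) = (if P then \<mu> X y else 0)" by simp

lemma hom_from_basis:
  assumes B: "\<And>p i q l y. \<mu> (E p i) (\<mu> (E q l) y) - \<mu> (E q l) (\<mu> (E p i) y)
     = (if i = q then \<mu> (E p l) y else 0) - (if l = p then \<mu> (E q i) y else 0)"
  shows "\<mu> (gl_bracket X Y) y = \<mu> X (\<mu> Y y) - \<mu> Y (\<mu> X y)"
proof -
  have 1: "\<mu> X (\<mu> Y y) = (\<Sum>p\<in>UNIV. \<Sum>i\<in>UNIV. \<Sum>q\<in>UNIV. \<Sum>l\<in>UNIV.
      sc (X$p$i * Y$q$l) (\<mu> (E p i) (\<mu> (E q l) y)))"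
    apply (subst mu_expand[of X])
    apply (subst mu_expand[of Y])
    apply (simp add: m_sum m_scale scale_sum_right)
    done
  have 2: "\<mu> Y (\<mu> X y) = (\<Sum>p\<in>UNIV. \<Sum>i\<in>UNIV. \<Sum>q\<in>UNIV. \<Sum>l\<in>UNIV.
      sc (X$p$i * Y$q$l) (\<mu> (E q l) (\<mu> (E p i) y)))"
    apply (subst mu_expand[of Y])
    apply (subst mu_expand[of X])
    apply (simp add: m_sum m_scale scale_sum_right)
    apply (rule trans[OF sum4_swap])
    apply (simp add: mult.commute)
    done
  have "\<mu> X (\<mu> Y y) - \<mu> Y (\<mu> X y) = (\<Sum>p\<in>UNIV. \<Sum>i\<in>UNIV. \<Sum>q\<in>UNIV. \<Sum>l\<in>UNIV.
      sc (X$p$i * Y$q$l) ((if i = q then \<mu> (E p l) y else 0) - (if l = p then \<mu> (E q i) y else 0)))"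
    unfolding 1 2 by (simp only: sum_subtractf[symmetric] scale_right_diff_distrib[symmetric] B)
  also have "\<dots> = (\<Sum>p\<in>UNIV. \<Sum>i\<in>UNIV. \<Sum>l\<in>UNIV. sc (X$p$i * Y$i$l) (\<mu> (E p l) y))
     - (\<Sum>p\<in>UNIV. \<Sum>i\<in>UNIV. \<Sum>q\<in>UNIV. sc (X$p$i * Y$q$p) (\<mu> (E q i) y))"
    by (simp add: sum_subtractf scale_right_diff_distrib sum_ifout if_distrib[of "sc _"] cong: if_cong)
  also have "\<dots> = \<mu> (gl_bracket X Y) y"
  proof -
    have a: "(\<Sum>p\<in>UNIV. \<Sum>i\<in>UNIV. \<Sum>l\<in>UNIV. sc (X$p$i * Y$i$l) (\<mu> (E p l) y))
      = (\<Sum>a\<in>UNIV. \<Sum>b\<in>UNIV. \<Sum>c\<in>UNIV. sc (X$a$c * Y$c$b) (\<mu> (E a b) y))"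
      by (rule sum.cong, simp, rule sum.swap)
    have b: "(\<Sum>p\<in>UNIV. \<Sum>i\<in>UNIV. \<Sum>q\<in>UNIV. sc (X$p$i * Y$q$p) (\<mu> (E q i) y))
      = (\<Sum>a\<in>UNIV. \<Sum>b\<in>UNIV. \<Sum>c\<in>UNIV. sc (Y$a$c * X$c$b) (\<mu> (E a b) y))"
      apply (rule trans[OF sum3_swap])
      apply (simp add: mult.commute)
      done
    show ?thesis unfolding a b
      apply (subst mu_expand[of "gl_bracket X Y"])
      apply (simp add: gl_bracket_def matrix_matrix_mult_def scale_sum_left sum_subtractf
          scale_left_diff_distrib)
      done
  qed
  finally show ?thesis by simp
qed

end

locale P42a = P42 +
  fixes a
  assumes a_lin: "VM_linear sc a"
    and a_def: "\<forall>v x. a (vtens sc v x) = (\<lambda>j. \<mu> (rank1_dual v j) x)"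
begin

lemma a_add: "a (\<lambda>i. f i + g i) = (\<lambda>j. a f j + a g j)"
  using a_lin by (simp add: VM_linear_def)

lemma a_zero: "a (\<lambda>i. 0) = (\<lambda>j. 0)"
proof -
  have "a (\<lambda>i. sc 0 (\<xi> i)) = (\<lambda>j. sc 0 (a \<xi> j))" for \<xi>
    using a_lin unfolding VM_linear_def by blast
  from this[of "\<lambda>i. 0"] show ?thesis by simp
qed

lemma a_sum: "a (\<lambda>i. \<Sum>k\<in>S. g k i) = (\<lambda>j. \<Sum>k\<in>S. a (g k) j)"
  by (induct S rule: infinite_finite_induct) (simp_all add: a_zero a_add)

lemma a_formula: "a \<xi> j = (\<Sum>i\<in>UNIV. \<mu> (E i j) (\<xi> i))"
proof -
  have "\<xi> = (\<lambda>k. \<Sum>i\<in>UNIV. vtens sc (axis i 1) (\<xi> i) k)"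
    by (rule ext) (simp add: vtens_def axis_def if_distrib[of "\<lambda>c. sc c _"] cong: if_cong)
  then have "a \<xi> = (\<lambda>j. \<Sum>i\<in>UNIV. a (vtens sc (axis i 1) (\<xi> i)) j)"
    by (metis a_sum)
  then show ?thesis using a_def by (simp add: E_def)
qed

lemma a2_formula: "a2 a \<zeta> i l = (\<Sum>p\<in>UNIV. \<mu> (E p l) (\<zeta> i p))"
  by (simp add: a2_def a_formula)

lemma a1_formula: "a1 a \<zeta> i l = (\<Sum>p\<in>UNIV. \<mu> (E p i) (\<zeta> p l))"
  by (simp add: a1_def a2_def tau_def a_formula)

lemma lhs_formula: "a1 a (a2 a \<zeta>) i l - a2 a (a1 a \<zeta>) i l =
   (\<Sum>p\<in>UNIV. \<Sum>q\<in>UNIV. \<mu> (E p i) (\<mu> (E q l) (\<zeta> p q)) - \<mu> (E q l) (\<mu> (E p i) (\<zeta> p q)))"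
  apply (simp add: a1_formula a2_formula m_sum sum_subtractf)
  apply (subst (2) sum.swap)
  apply simp
  done

lemma rhs_formula: "tau (\<lambda>i l. a1 a \<zeta> i l - a2 a \<zeta> i l) i l =
   (\<Sum>p\<in>UNIV. \<mu> (E p l) (\<zeta> p i)) - (\<Sum>p\<in>UNIV. \<mu> (E p i) (\<zeta> l p))"
  by (simp add: tau_def a1_formula a2_formula)

theorem main:
  "(\<forall>X Y. \<mu> (gl_bracket X Y) = (\<lambda>x. \<mu> X (\<mu> Y x) - \<mu> Y (\<mu> X x)))
     \<longleftrightarrow> (\<forall>\<zeta>. (\<lambda>i l. a1 a (a2 a \<zeta>) i l - a2 a (a1 a \<zeta>) i l)
               = tau (\<lambda>i l. a1 a \<zeta> i l - a2 a \<zeta> i l))"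
proof
  assume H: "\<forall>X Y. \<mu> (gl_bracket X Y) = (\<lambda>x. \<mu> X (\<mu> Y x) - \<mu> Y (\<mu> X x))"
  show "\<forall>\<zeta>. (\<lambda>i l. a1 a (a2 a \<zeta>) i l - a2 a (a1 a \<zeta>) i l)
               = tau (\<lambda>i l. a1 a \<zeta> i l - a2 a \<zeta> i l)"
  proof (intro allI ext)
    fix \<zeta> i l
    have "\<And>p q x. \<mu> (E p i) (\<mu> (E q l) x) - \<mu> (E q l) (\<mu> (E p i) x)
      = (if i = q then \<mu> (E p l) x else 0) - (if l = p then \<mu> (E q i) x else 0)"
      using H mu_bracket_E by metis
    then show "a1 a (a2 a \<zeta>) i l - a2 a (a1 a \<zeta>) i l = tau (\<lambda>i l. a1 a \<zeta> i l - a2 a \<zeta> i l) i l"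
      unfolding lhs_formula rhs_formula
      by (simp add: sum_subtractf sum_ifout cong: if_cong)
  qed
next
  assume H: "\<forall>\<zeta>. (\<lambda>i l. a1 a (a2 a \<zeta>) i l - a2 a (a1 a \<zeta>) i l)
               = tau (\<lambda>i l. a1 a \<zeta> i l - a2 a \<zeta> i l)"
  have B: "\<mu> (E p i) (\<mu> (E q l) y) - \<mu> (E q l) (\<mu> (E p i) y)
     = (if i = q then \<mu> (E p l) y else 0) - (if l = p then \<mu> (E q i) y else 0)" for p i q l y
  proof -
    define \<zeta> where "\<zeta> = (\<lambda>p' q'. if p' = p then (if q' = q then y else 0) else 0)"
    have "a1 a (a2 a \<zeta>) i l - a2 a (a1 a \<zeta>) i l = tau (\<lambda>i l. a1 a \<zeta> i l - a2 a \<zeta> i l) i l"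
      using H by metis
    then show ?thesis
      unfolding lhs_formula rhs_formula \<zeta>_def
      by (auto simp add: m_if ifdiff sum_ifout cong: if_cong)
  qed
  show "\<forall>X Y. \<mu> (gl_bracket X Y) = (\<lambda>x. \<mu> X (\<mu> Y x) - \<mu> Y (\<mu> X x))"
    using hom_from_basis[OF B] by blast
qed

end

theorem proposition4p2:
  fixes sc :: "'k::field \<Rightarrow> 'm::ab_group_add \<Rightarrow> 'm"
    and \<mu> :: "'k^'n::finite^'n \<Rightarrow> 'm \<Rightarrow> 'm"
    and a :: "('n \<Rightarrow> 'm) \<Rightarrow> ('n \<Rightarrow> 'm)"
  assumes M: "vector_space sc"
    and mu_lin: "gl_rep_linear sc \<mu>"
    and a_lin: "VM_linear sc a"
    and a_def: "\<forall>v x. a (vtens sc v x) = (\<lambda>j. \<mu> (rank1_dual v j) x)"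
  shows "(\<forall>X Y. \<mu> (gl_bracket X Y) = (\<lambda>x. \<mu> X (\<mu> Y x) - \<mu> Y (\<mu> X x)))
     \<longleftrightarrow> (\<forall>\<zeta>. (\<lambda>i l. a1 a (a2 a \<zeta>) i l - a2 a (a1 a \<zeta>) i l)
               = tau (\<lambda>i l. a1 a \<zeta> i l - a2 a \<zeta> i l))"
proof -
  interpret P42a sc \<mu> a
    using M mu_lin a_lin a_def by (simp add: P42a_def P42_def P42_axioms_def P42a_axioms_def)
  show ?thesis by (rule main)
qed

end
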